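(* Let $M\subset\mathbb{R}^m$ be a polyhedral complex and $f:|M|\to\mathbb{R}^n$ a piecewise-linear map which is affine on each cell of $M$. Let $N$ be a polyhedral complex embedded in $\mathbb{R}^n$. Suppose $f$ is transverse on cells of $M$ to the interior of every cell of $N$. If $C\le C'$ is a face relation in $M$, $D\le D'$ is a face relation in $N$, and $f(C^\circ)\cap D$ is nonempty, then $f(C'^\circ)\cap D'^\circ$ is nonempty.
   Context: Polyhedra are intersections of finitely many closed half-spaces (possibly unbounded); $P^\circ$ denotes the interior of $P$ relative to its affine span (a point is its own interior). $C\le C'$ means $C$ is a face of $C'$ or equal to it. A polyhedral complex is a finite set of polyhedra closed under taking faces such that any two members intersect in a common face; $|M|$ is the union of its cells. A map $f$ affine on each cell of $M$ is transverse on cells of $M$ to a smooth submanifold $Z$ (without boundary) if for every cell $C$ of $M$, the restriction $f|_{C^\circ}$ is transverse to $Z$, i.e. for every $x\in C^\circ$ with $f(x)\in Z$, $df(T_xC^\circ)+T_{f(x)}Z=\mathbb{R}^n$. *)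

theory Defs
  imports "HOL-Analysis.Analysis"
begin

text \<open>Faces are the library notion face_of; the empty set is a face of everything.\<close>
definition polyhedral_complex :: "'a::euclidean_space set set \<Rightarrow> bool" where
  "polyhedral_complex M \<longleftrightarrow>
     finite M \<and>
     (\<forall>C\<in>M. polyhedron C) \<and>
     (\<forall>C\<in>M. \<forall>F. F face_of C \<and> F \<noteq> {} \<longrightarrow> F \<in> M) \<and>
     (\<forall>C\<in>M. \<forall>C'\<in>M. (C \<inter> C') face_of C \<and> (C \<inter> C') face_of C')"

definition affine_on :: "'a::real_vector set \<Rightarrow> ('a \<Rightarrow> 'b::real_vector) \<Rightarrow> bool" where
  "affine_on C f \<longleftrightarrow> (\<exists>g c. linear g \<and> (\<forall>x\<in>C. f x = g x + c))"

text \<open>Tangent space at x of (the relative interior of) a convex set S containing x: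
  the linear subspace parallel to the affine hull of S.\<close>
definition tangent_space :: "'a::real_vector set \<Rightarrow> 'a \<Rightarrow> 'a set" where
  "tangent_space S x = span ((\<lambda>y. y - x) ` S)"

definition transverse_on_cells ::
  "'a::euclidean_space set set \<Rightarrow> ('a \<Rightarrow> 'b::euclidean_space) \<Rightarrow> 'b set \<Rightarrow> bool" where
  "transverse_on_cells M f D \<longleftrightarrow>
     (\<forall>C\<in>M. \<forall>x\<in>rel_interior C. f x \<in> rel_interior D \<longrightarrow>
        (\<exists>g. linear g \<and> (\<forall>y\<in>C. f y = f x + g (y - x)) \<and>
             {u + v | u v. u \<in> g ` tangent_space C x \<and> v \<in> tangent_space D (f x)} = UNIV))"

end

theory Submission imports Defs begin

lemma face_rel_int_aux:
  fixes p :: "'a::euclidean_space"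
  shows "\<forall>S. polyhedron S \<and> p \<in> S \<and> nat (aff_dim S + 1) = n \<longrightarrow> (\<exists>F. F face_of S \<and> p \<in> rel_interior F)"
proof (induction n rule: less_induct)
  case (less n)
  show ?case
  proof (intro allI impI)
    fix S :: "'a set" assume H: "polyhedron S \<and> p \<in> S \<and> nat (aff_dim S + 1) = n"
    show "\<exists>F. F face_of S \<and> p \<in> rel_interior F"
    proof (cases "p \<in> rel_interior S")
      case True
      then show ?thesis using H face_of_refl polyhedron_imp_convex by blast
    next
      case False
      then obtain F where F: "F facet_of S" "p \<in> F" using H rel_interior_of_polyhedron[of S] by blast
      have "polyhedron F" using F H face_of_polyhedron_polyhedron facet_of_imp_face_of by blast
      moreover have "nat (aff_dim F + 1) < n" using F H unfolding facet_of_def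
        using aff_dim_geq[of F] by auto
      ultimately obtain G where "G face_of F" "p \<in> rel_interior G" using less F by blast
      then show ?thesis using F face_of_trans facet_of_imp_face_of by blast
    qed
  qed
qed

lemma face_rel_int:
  fixes S :: "'a::euclidean_space set"
  assumes "polyhedron S" "p \<in> S"
  shows "\<exists>F. F face_of S \<and> p \<in> rel_interior F"
  using face_rel_int_aux assms by blast

lemma tangent_aff:
  fixes S :: "'a::euclidean_space set"
  assumes "a \<in> S" "u \<in> tangent_space S a"
  shows "a + u \<in> affine hull S"
proof -
  have "(\<lambda>y. y - a) ` S = insert 0 ((\<lambda>y. -a + y) ` (S - {a}))" using assms(1) by auto
  then have "u \<in> span ((\<lambda>y. -a + y) ` (S - {a}))" using assms(2) unfolding tangent_space_def
    by (simp add: span_insert_0)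
  then show ?thesis using affine_hull_span2[OF assms(1)] by blast
qed

lemma tangent_small:
  fixes S :: "'a::euclidean_space set"
  assumes "a \<in> rel_interior S" "u \<in> tangent_space S a"
  shows "\<exists>e>0. \<forall>r. \<bar>r\<bar> < e \<longrightarrow> a + r *\<^sub>R u \<in> S"
proof -
  obtain e where e: "e > 0" "ball a e \<inter> affine hull S \<subseteq> S" using assms(1) mem_rel_interior_ball by blast
  have aS: "a \<in> S" using assms(1) rel_interior_subset by blast
  define d where "d = e / (norm u + 1)"
  have "norm u + 1 > 0" by (simp add: add_nonneg_pos)
  then have d: "d > 0" using e by (simp add: d_def)
  show ?thesis
  proof (intro exI[of _ d] conjI allI impI d)
    fix r :: real assume r: "\<bar>r\<bar> < d"
    have "r *\<^sub>R u \<in> tangent_space S a" using assms(2) unfolding tangent_space_def by (simp add: span_mul)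
    then have "a + r *\<^sub>R u \<in> affine hull S" using tangent_aff aS by blast
    moreover have "norm (r *\<^sub>R u) < e"
    proof -
      have "norm (r *\<^sub>R u) = \<bar>r\<bar> * norm u" by simp
      also have "\<dots> \<le> d * norm u" using r by (simp add: mult_right_mono)
      also have "\<dots> < e"
      proof -
        have "e * norm u < e * (norm u + 1)" using e by simp
        then show ?thesis using \<open>norm u + 1 > 0\<close> unfolding d_def by (simp add: pos_divide_less_eq)
      qed
      finally show ?thesis .
    qed
    then have "a + r *\<^sub>R u \<in> ball a e" by (simp add: dist_norm)
    ultimately show "a + r *\<^sub>R u \<in> S" using e by blast
  qed
qed

lemma vec_identity2:
  fixes x u c :: "'b::real_vector" and s r :: real
  assumes h: "(1 - s) * r = s"
  shows "((x + r *\<^sub>R u) - s *\<^sub>R ((x + r *\<^sub>R u) - c)) - x = s *\<^sub>R (u + (c - x))"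
proof -
  have "((x + r *\<^sub>R u) - s *\<^sub>R ((x + r *\<^sub>R u) - c)) - x = ((1 - s) * r) *\<^sub>R u + s *\<^sub>R (c - x)"
    by (simp add: scaleR_diff_right scaleR_diff_left algebra_simps)
  also have "\<dots> = s *\<^sub>R (u + (c - x))" unfolding h by (simp add: scaleR_right_distrib)
  finally show ?thesis .
qed

lemma vec_identity3:
  fixes a b v z p :: "'b::real_vector" and s :: real
  assumes "z - p - b = a + v"
  shows "p + s *\<^sub>R (a + b) = p + s *\<^sub>R (z - p - v)"
proof -
  have "a + b = (a + v) + b - v" by simp
  also have "\<dots> = (z - p - b) + b - v" using assms by simp
  also have "\<dots> = z - p - v" by simp
  finally show ?thesis by simp
qed

lemma vec_identity:
  fixes p v z :: "'b::real_vector" and s r :: real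
  assumes h: "(1 - s) * r = s"
  shows "p + s *\<^sub>R (z - p - v) = (p - r *\<^sub>R v) - s *\<^sub>R ((p - r *\<^sub>R v) - z)"
proof -
  have "(p - r *\<^sub>R v) - s *\<^sub>R ((p - r *\<^sub>R v) - z) = p - ((1 - s) * r) *\<^sub>R v - s *\<^sub>R p + s *\<^sub>R z"
    by (simp add: scaleR_diff_right scaleR_diff_left algebra_simps)
  also have "\<dots> = p + s *\<^sub>R (z - p - v)" unfolding h by (simp add: scaleR_diff_right)
  finally show ?thesis by simp
qed

theorem lemma17:
  fixes M :: "'a::euclidean_space set set"
    and N :: "'b::euclidean_space set set"
    and f :: "'a \<Rightarrow> 'b"
  assumes "polyhedral_complex M"
    and "polyhedral_complex N"
    and "\<forall>C\<in>M. affine_on C f"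
    and "\<forall>D\<in>N. transverse_on_cells M f D"
    and "C \<in> M" and "C' \<in> M" and "C face_of C'"
    and "D \<in> N" and "D' \<in> N" and "D face_of D'"
    and "f ` rel_interior C \<inter> D \<noteq> {}"
  shows "f ` rel_interior C' \<inter> rel_interior D' \<noteq> {}"
proof -
  obtain x where x: "x \<in> rel_interior C" "f x \<in> D" using assms(11) by blast
  define p where "p = f x"
  have polyD: "polyhedron D" using assms(2,8) unfolding polyhedral_complex_def by blast
  obtain E where E: "E face_of D" "p \<in> rel_interior E" using face_rel_int[OF polyD] x p_def by blast
  have "E \<noteq> {}" using E rel_interior_subset by blast
  then have EN: "E \<in> N" using assms(2,8) E unfolding polyhedral_complex_def by blast
  have ED': "E face_of D'" using E assms(10) face_of_trans by blast
  have ED'sub: "E \<subseteq> D'" using ED' face_of_imp_subset by blast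
  obtain g where g: "linear g" "\<forall>y\<in>C. f y = f x + g (y - x)"
    "{u + v | u v. u \<in> g ` tangent_space C x \<and> v \<in> tangent_space E (f x)} = UNIV"
    using assms(4) EN assms(5) x E(2) p_def unfolding transverse_on_cells_def by blast
  obtain h c where h: "linear h" "\<forall>y\<in>C'. f y = h y + c"
    using assms(3,6) unfolding affine_on_def by blast
  have CC': "C \<subseteq> C'" using assms(7) face_of_imp_subset by blast
  have xC: "x \<in> C" using x rel_interior_subset by blast
  have hx: "\<And>y. y \<in> C' \<Longrightarrow> f y = p + h (y - x)"
    using h xC CC' p_def by (auto simp: linear_diff)
  have gh: "\<And>w. w \<in> tangent_space C x \<Longrightarrow> g w = h w"
  proof -
    fix w assume w: "w \<in> tangent_space C x"
    have "\<forall>q\<in>(\<lambda>y. y - x) ` C. g q = h q"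
    proof
      fix q assume "q \<in> (\<lambda>y. y - x) ` C"
      then obtain y where y: "y \<in> C" "q = y - x" by blast
      then show "g q = h q" using g(2) hx[of y] CC' p_def by auto
    qed
    then show "g w = h w" using linear_eq_on_span[OF g(1) h(1)] w unfolding tangent_space_def by blast
  qed
  have "C' \<noteq> {}" using CC' xC by blast
  moreover have cvC': "convex C'" using assms(1,6) polyhedron_imp_convex unfolding polyhedral_complex_def by blast
  ultimately obtain c' where c': "c' \<in> rel_interior C'" using rel_interior_eq_empty by blast
  have "D' \<noteq> {}" using ED'sub E rel_interior_subset by blast
  moreover have cvD': "convex D'" using assms(2,9) polyhedron_imp_convex unfolding polyhedral_complex_def by blast
  ultimately obtain z where z: "z \<in> rel_interior D'" using rel_interior_eq_empty by blast
  have "z - p - h (c' - x) \<in> {u + v | u v. u \<in> g ` tangent_space C x \<and> v \<in> tangent_space E (f x)}"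
    using g(3) by blast
  then obtain u0 v where uv: "u0 \<in> tangent_space C x" "v \<in> tangent_space E p" "z - p - h (c' - x) = g u0 + v"
    using p_def by blast
  have mv: "- v \<in> tangent_space E p" using uv(2) unfolding tangent_space_def by (simp add: span_neg)
  obtain e1 where e1: "e1 > 0" "\<forall>r. \<bar>r\<bar> < e1 \<longrightarrow> x + r *\<^sub>R u0 \<in> C" using tangent_small[OF x(1) uv(1)] by blast
  obtain e2 where e2: "e2 > 0" "\<forall>r. \<bar>r\<bar> < e2 \<longrightarrow> p + r *\<^sub>R (- v) \<in> E" using tangent_small[OF E(2) mv] by blast
  define r where "r = min e1 e2 / 2"
  have r: "r > 0" "\<bar>r\<bar> < e1" "\<bar>r\<bar> < e2" using e1 e2 unfolding r_def by auto
  define X where "X = x + r *\<^sub>R u0"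
  define Q where "Q = p - r *\<^sub>R v"
  have XC': "X \<in> C'" using e1 r CC' unfolding X_def by blast
  have "p + r *\<^sub>R (- v) \<in> E" using e2 r by blast
  then have "Q \<in> E" unfolding Q_def by simp
  then have QD': "Q \<in> D'" using ED'sub by blast
  define s where "s = r / (1 + r)"
  have r1: "1 + r > 0" using r by simp
  have s1: "s > 0" using r r1 unfolding s_def by simp
  have s2: "s \<le> 1" using r r1 unfolding s_def by simp
  have s3: "(1 - s) * r = s"
  proof -
    have "1 - s = 1 / (1 + r)" using r1 unfolding s_def by (simp add: field_simps)
    then show ?thesis unfolding s_def by simp
  qed
  note s = s1 s2 s3
  define y where "y = X - s *\<^sub>R (X - c')"
  have yC': "y \<in> rel_interior C'" unfolding y_def
    using rel_interior_closure_convex_shrink[OF cvC' c' _ s(1,2)] XC' closure_subset by blast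
  have fyD': "Q - s *\<^sub>R (Q - z) \<in> rel_interior D'"
    using rel_interior_closure_convex_shrink[OF cvD' z _ s(1,2)] QD' closure_subset by blast
  have "y - x = s *\<^sub>R (u0 + (c' - x))" unfolding y_def X_def by (rule vec_identity2[OF s(3)])
  moreover have "y \<in> C'" using yC' rel_interior_subset by blast
  ultimately have "f y = p + h (s *\<^sub>R (u0 + (c' - x)))" using hx[of y] by simp
  also have "\<dots> = p + s *\<^sub>R (h u0 + h (c' - x))"
    by (simp only: linear_scale[OF h(1)] linear_add[OF h(1)])
  finally have fy0: "f y = p + s *\<^sub>R (h u0 + h (c' - x))" .
  have uv3: "z - p - h (c' - x) = h u0 + v" using uv(3) unfolding gh[OF uv(1)] .
  have "f y = p + s *\<^sub>R (z - p - v)" using fy0 vec_identity3[OF uv3] by (rule trans)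
  also have "\<dots> = Q - s *\<^sub>R (Q - z)" unfolding Q_def by (rule vec_identity[OF s(3)])
  finally have "f y = Q - s *\<^sub>R (Q - z)" .
  then have "f y \<in> rel_interior D'" using fyD' by simp
  moreover have "f y \<in> f ` rel_interior C'" using yC' by (rule imageI)
  ultimately have "f y \<in> f ` rel_interior C' \<inter> rel_interior D'" by (rule IntI[rotated])
  then show ?thesis by (metis empty_iff)
qed

end
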